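(* Let $W=\langle s,t: s^2=t^2=(st)^m=1\rangle$ be a Coxeter group of rank $2$ with $S=\{s,t\}$, $m\ge2$ the order of $st$, and $w_0$ its longest element. Then the right $W$-module $e_S\mathbb CW$ affords the character $\Phi_S=\operatorname{Ind}_{\langle w_0\rangle}^W(1)-1_S$.
   Context: $1_S$ is the trivial character of $W$. For $J\subseteq S$: $X_J=\{w\in W:\ell(rw)>\ell(w)\ \forall r\in J\}$, $x_J=\sum_{x\in X_J}x^{-1}$, $X_J^\sharp=\{x\in X_J:x^{-1}Jx\subseteq S\}$; $m_{KL}=|X_K\cap X_L^\sharp|$ if $L\subseteq K$ and $0$ otherwise; the elements $e_L$ are defined by $x_K=\sum_{L\subseteq S}m_{KL}e_L$ for all $K\subseteq S$. *)

theory Defs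
  imports Complex_Main "HOL-Algebra.Generated_Groups" "HOL-Library.Function_Algebras"
begin

definition cox_len :: "('a, 'b) monoid_scheme \<Rightarrow> 'a set \<Rightarrow> 'a \<Rightarrow> nat" where
  "cox_len G S w = (LEAST n. \<exists>ws. set ws \<subseteq> S \<and> length ws = n \<and> foldr (\<otimes>\<^bsub>G\<^esub>) ws \<one>\<^bsub>G\<^esub> = w)"

definition longest_elt :: "('a, 'b) monoid_scheme \<Rightarrow> 'a set \<Rightarrow> 'a" where
  "longest_elt G S = (THE w. w \<in> carrier G \<and> (\<forall>v\<in>carrier G. cox_len G S v \<le> cox_len G S w))"

definition X_set :: "('a, 'b) monoid_scheme \<Rightarrow> 'a set \<Rightarrow> 'a set \<Rightarrow> 'a set" where
  "X_set G S J = {w \<in> carrier G. \<forall>r\<in>J. cox_len G S (r \<otimes>\<^bsub>G\<^esub> w) > cox_len G S w}"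

definition X_sharp :: "('a, 'b) monoid_scheme \<Rightarrow> 'a set \<Rightarrow> 'a set \<Rightarrow> 'a set" where
  "X_sharp G S J = {x \<in> X_set G S J. (\<lambda>r. inv\<^bsub>G\<^esub> x \<otimes>\<^bsub>G\<^esub> r \<otimes>\<^bsub>G\<^esub> x) ` J \<subseteq> S}"

definition m_coef :: "('a, 'b) monoid_scheme \<Rightarrow> 'a set \<Rightarrow> 'a set \<Rightarrow> 'a set \<Rightarrow> nat" where
  "m_coef G S K L = (if L \<subseteq> K then card (X_set G S K \<inter> X_sharp G S L) else 0)"

definition group_alg :: "('a, 'b) monoid_scheme \<Rightarrow> ('a \<Rightarrow> complex) set" where
  "group_alg G = {a. \<forall>x. x \<notin> carrier G \<longrightarrow> a x = 0}"

definition gdelta :: "'a \<Rightarrow> 'a \<Rightarrow> complex" where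
  "gdelta w = (\<lambda>x. if x = w then 1 else 0)"

text \<open>Multiplication in CW (convolution), so that gdelta u * gdelta v = gdelta (u v).\<close>
definition gmult :: "('a, 'b) monoid_scheme \<Rightarrow> ('a \<Rightarrow> complex) \<Rightarrow> ('a \<Rightarrow> complex) \<Rightarrow> 'a \<Rightarrow> complex" where
  "gmult G a b = (\<lambda>w. if w \<in> carrier G
      then (\<Sum>u\<in>carrier G. a u * b (inv\<^bsub>G\<^esub> u \<otimes>\<^bsub>G\<^esub> w)) else 0)"

definition x_elt :: "('a, 'b) monoid_scheme \<Rightarrow> 'a set \<Rightarrow> 'a set \<Rightarrow> 'a \<Rightarrow> complex" where
  "x_elt G S J = (\<Sum>x\<in>X_set G S J. gdelta (inv\<^bsub>G\<^esub> x))"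

text \<open>The family (e_L)_{L \<subseteq> S}, uniquely determined by x_K = sum_L m_{KL} e_L for all K \<subseteq> S
  (extended by 0 outside the subsets of S, so that it is unique).\<close>
definition e_fam :: "('a, 'b) monoid_scheme \<Rightarrow> 'a set \<Rightarrow> 'a set \<Rightarrow> 'a \<Rightarrow> complex" where
  "e_fam G S = (THE e. (\<forall>K. K \<subseteq> S \<longrightarrow>
        x_elt G S K = (\<Sum>L\<in>Pow S. (\<lambda>x. of_nat (m_coef G S K L) * e L x)))
      \<and> (\<forall>L. \<not> L \<subseteq> S \<longrightarrow> e L = (\<lambda>_. 0)))"

definition cscale :: "complex \<Rightarrow> ('a \<Rightarrow> complex) \<Rightarrow> 'a \<Rightarrow> complex" where
  "cscale c v = (\<lambda>x. c * v x)"

definition subspace_trace :: "('a \<Rightarrow> complex) set \<Rightarrow> (('a \<Rightarrow> complex) \<Rightarrow> ('a \<Rightarrow> complex)) \<Rightarrow> complex" where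
  "subspace_trace V f = (let B = (SOME B. B \<subseteq> V \<and> \<not> module.dependent cscale B \<and> module.span cscale B = V)
      in \<Sum>b\<in>B. module.representation cscale B (f b) b)"

definition right_ideal_char :: "('a, 'b) monoid_scheme \<Rightarrow> ('a \<Rightarrow> complex) \<Rightarrow> 'a \<Rightarrow> complex" where
  "right_ideal_char G a w = subspace_trace {gmult G a b | b. b \<in> group_alg G} (\<lambda>v. gmult G v (gdelta w))"

definition ind_triv :: "('a, 'b) monoid_scheme \<Rightarrow> 'a set \<Rightarrow> 'a \<Rightarrow> complex" where
  "ind_triv G H w = (1 / of_nat (card H)) *
     (\<Sum>g\<in>carrier G. if inv\<^bsub>G\<^esub> g \<otimes>\<^bsub>G\<^esub> w \<otimes>\<^bsub>G\<^esub> g \<in> H then 1 else 0)"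

end

theory Submission
  imports Defs
begin

lemma fsum_apply: "(sum f A) x = sum (\<lambda>i. f i x) A"
  by (induct A rule: infinite_finite_induct) auto

lemma vs_cscale: "vector_space (cscale :: complex \<Rightarrow> ('a \<Rightarrow> complex) \<Rightarrow> _)"
  by unfold_locales (auto simp: cscale_def algebra_simps)

interpretation cs: vector_space "cscale :: complex \<Rightarrow> ('a \<Rightarrow> complex) \<Rightarrow> _"
  by (rule vs_cscale)

lemma trace_formula:
  fixes V :: "('a \<Rightarrow> complex) set" and I :: "'a set" and p :: "'a \<Rightarrow> 'a \<Rightarrow> complex"
  assumes finI: "finite I"
    and sub: "cs.subspace V"
    and pV: "\<And>g. g \<in> I \<Longrightarrow> p g \<in> V"
    and expand: "\<And>v. v \<in> V \<Longrightarrow> v = (\<Sum>g\<in>I. cscale (v g) (p g))"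
    and fV: "\<And>v. v \<in> V \<Longrightarrow> f v \<in> V"
    and flin: "\<And>c v. (\<And>g. g \<in> I \<Longrightarrow> v g \<in> V) \<Longrightarrow> f (\<Sum>g\<in>I. cscale (c g) (v g)) = (\<Sum>g\<in>I. cscale (c g) (f (v g)))"
  shows "subspace_trace V f = (\<Sum>g\<in>I. f (p g) g)"
proof -
  define P where "P = (\<lambda>B. B \<subseteq> V \<and> \<not> cs.dependent B \<and> cs.span B = V)"
  obtain B0 where B0: "B0 \<subseteq> V" "cs.independent B0" "V \<subseteq> cs.span B0"
    using cs.basis_exists by blast
  have "cs.span B0 \<subseteq> V" using B0(1) sub cs.span_minimal by blast
  with B0 have "P B0" unfolding P_def by auto
  define B where "B = (SOME B. P B)"
  have PB: "P B" unfolding B_def by (rule someI[of P B0, OF \<open>P B0\<close>])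
  hence BV: "B \<subseteq> V" and indB: "cs.independent B" and spB: "cs.span B = V" unfolding P_def by auto
  have "V \<subseteq> cs.span (p ` I)"
  proof
    fix v assume "v \<in> V"
    hence "v = (\<Sum>g\<in>I. cscale (v g) (p g))" by (rule expand)
    also have "\<dots> \<in> cs.span (p ` I)"
      by (intro cs.span_sum cs.span_scale cs.span_base) auto
    finally show "v \<in> cs.span (p ` I)" .
  qed
  hence finB: "finite B" using cs.independent_span_bound[OF finite_imageI[OF finI] indB] BV by auto
  let ?R = "cs.representation B"
  have tr: "subspace_trace V f = (\<Sum>b\<in>B. ?R (f b) b)"
    unfolding subspace_trace_def Let_def P_def[symmetric] B_def[symmetric] ..
  have "\<And>b. b \<in> B \<Longrightarrow> ?R (f b) b = (\<Sum>g\<in>I. b g * ?R (f (p g)) b)"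
  proof -
    fix b assume b: "b \<in> B"
    have "f b = f (\<Sum>g\<in>I. cscale (b g) (p g))" using expand[of b] b BV by auto
    also have "\<dots> = (\<Sum>g\<in>I. cscale (b g) (f (p g)))" by (rule flin) (rule pV)
    finally have fb: "f b = (\<Sum>g\<in>I. cscale (b g) (f (p g)))" .
    have inspan: "\<And>g. g \<in> I \<Longrightarrow> f (p g) \<in> cs.span B" using fV pV spB by auto
    have "?R (f b) = (\<lambda>b'. \<Sum>g\<in>I. ?R (cscale (b g) (f (p g))) b')"
      unfolding fb by (rule cs.representation_sum[OF indB]) (intro cs.span_scale inspan)
    also have "\<dots> = (\<lambda>b'. \<Sum>g\<in>I. b g * ?R (f (p g)) b')"
      using cs.representation_scale[OF indB inspan] by simp
    finally show "?R (f b) b = (\<Sum>g\<in>I. b g * ?R (f (p g)) b)" by simp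
  qed
  hence "(\<Sum>b\<in>B. ?R (f b) b) = (\<Sum>b\<in>B. \<Sum>g\<in>I. b g * ?R (f (p g)) b)" by simp
  also have "\<dots> = (\<Sum>g\<in>I. \<Sum>b\<in>B. ?R (f (p g)) b * b g)"
    by (subst sum.swap) (simp add: mult.commute)
  also have "\<dots> = (\<Sum>g\<in>I. (\<Sum>b\<in>B. cscale (?R (f (p g)) b) b) g)"
    by (simp add: fsum_apply cscale_def)
  also have "\<dots> = (\<Sum>g\<in>I. f (p g) g)"
  proof (rule sum.cong[OF refl])
    fix g assume "g \<in> I"
    hence "f (p g) \<in> cs.span B" using fV pV spB by auto
    thus "(\<Sum>b\<in>B. cscale (?R (f (p g)) b) b) g = f (p g) g"
      using cs.sum_representation_eq[OF indB _ finB order_refl] by simp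
  qed
  finally show ?thesis using tr by simp
qed

definition LT :: "int \<Rightarrow> int \<Rightarrow> int" where "LT M j = min (2*j+1) (2*(M - j) - 1)"
definition LF :: "int \<Rightarrow> int \<Rightarrow> int" where "LF M j = 2 * min j (M - j)"
definition SJ :: "int \<Rightarrow> int \<Rightarrow> int" where "SJ M j = (if j = 0 then 0 else M - j)"
definition TJ :: "int \<Rightarrow> int \<Rightarrow> int" where "TJ M j = M - 1 - j"

context fixes M j :: int assumes jr: "0 \<le> j" "j < M" and M2: "2 \<le> M"
begin
lemma a1s: "LF M (SJ M j) = LT M j + 1 \<or> LF M (SJ M j) = LT M j - 1"
  using jr M2 unfolding LT_def LF_def SJ_def min_def by presburger
lemma a1s': "LT M (SJ M j) = LF M j + 1 \<or> LT M (SJ M j) = LF M j - 1"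
  using jr M2 unfolding LT_def LF_def SJ_def min_def by presburger
lemma a1t: "LF M (TJ M j) = LT M j + 1 \<or> LF M (TJ M j) = LT M j - 1"
  using jr M2 unfolding LT_def LF_def TJ_def min_def by presburger
lemma a1t': "LT M (TJ M j) = LF M j + 1 \<or> LT M (TJ M j) = LF M j - 1"
  using jr M2 unfolding LT_def LF_def TJ_def min_def by presburger
lemma a0: "0 < LT M j" "0 \<le> LF M j"
  using jr M2 unfolding LT_def LF_def min_def by presburger+
lemma a2: "LF M j = 0 \<longleftrightarrow> j = 0"
  using jr M2 unfolding LF_def min_def by presburger
lemma a3: "LF M (SJ M j) < LT M j \<or> LF M (TJ M j) < LT M j"
  using jr M2 unfolding LT_def LF_def SJ_def TJ_def min_def by presburger
lemma a3': "0 < LF M j \<Longrightarrow> LT M (SJ M j) < LF M j \<or> LT M (TJ M j) < LF M j"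
  using jr M2 unfolding LT_def LF_def SJ_def TJ_def min_def by presburger
lemma sjr: "0 \<le> SJ M j \<and> SJ M j < M \<and> SJ M (SJ M j) = j"
  using jr M2 unfolding SJ_def by presburger
lemma tjr: "0 \<le> TJ M j \<and> TJ M j < M \<and> TJ M (TJ M j) = j"
  using jr M2 unfolding TJ_def by presburger
end

locale dih = group G for G :: "('a, 'b) monoid_scheme" (structure) +
  fixes s t :: 'a and m :: nat
  assumes s_in: "s \<in> carrier G" and t_in: "t \<in> carrier G"
    and gen: "carrier G = generate G {s, t}"
    and s1: "s \<noteq> \<one>" and t1: "t \<noteq> \<one>"
    and ss: "s \<otimes> s = \<one>" and tt: "t \<otimes> t = \<one>"
    and m2: "m \<ge> 2"
    and rm: "(s \<otimes> t) [^] m = \<one>"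
    and rk: "\<forall>k. 0 < k \<and> k < m \<longrightarrow> (s \<otimes> t) [^] k \<noteq> \<one>"
begin

definition r where "r = s \<otimes> t"
definition E :: "int \<Rightarrow> bool \<Rightarrow> 'a" where
  "E k b = r [^] k \<otimes> (if b then s else \<one>)"

lemma r_in[simp]: "r \<in> carrier G" by (simp add: r_def s_in t_in)
lemma E_in[simp]: "E k b \<in> carrier G" by (simp add: E_def s_in)

lemma inv_s: "inv s = s" using ss s_in by (simp add: inv_equality)
lemma inv_t: "inv t = t" using tt t_in by (simp add: inv_equality)

lemma s_r: "s \<otimes> r = inv r \<otimes> s"
proof -
  have "s \<otimes> r = t" by (simp add: r_def ss s_in t_in flip: m_assoc)
  moreover have "inv r \<otimes> s = t"
    by (simp add: r_def inv_mult_group s_in t_in inv_s inv_t m_assoc ss)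
  ultimately show ?thesis by simp
qed

lemma s_rn: "s \<otimes> r [^] (n::nat) = r [^] (- int n) \<otimes> s"
proof (induct n)
  case 0 thus ?case by (simp add: s_in)
next
  case (Suc n)
  have "s \<otimes> r [^] Suc n = (s \<otimes> r [^] n) \<otimes> r" by (simp add: m_assoc s_in)
  also have "\<dots> = r [^] (- int n) \<otimes> (s \<otimes> r)" by (simp add: Suc m_assoc s_in)
  also have "\<dots> = (r [^] (- int n) \<otimes> inv r) \<otimes> s" by (simp add: s_r m_assoc s_in)
  also have "r [^] (- int n) \<otimes> inv r = r [^] (- int (Suc n))"
  proof -
    have e: "- int (Suc n) = - int n + (-1)" by simp
    have "r [^] (- int (Suc n)) = r [^] (- int n + (-1))" by (simp only: e)
    also have "\<dots> = r [^] (- int n) \<otimes> r [^] (-1::int)" by (rule int_pow_mult) simp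
    finally show ?thesis by (simp add: int_pow_neg)
  qed
  finally show ?case .
qed

lemma s_rk: "s \<otimes> r [^] (k::int) = r [^] (- k) \<otimes> s"
proof (cases "k \<ge> 0")
  case True
  then obtain n where "k = int n" by (metis nonneg_eq_int)
  thus ?thesis using s_rn by (simp add: int_pow_int)
next
  case False
  then obtain n where k: "k = - int n" by (metis neg_int_cases not_le order_less_imp_le)
  have h: "s \<otimes> r [^] n = r [^] (- int n) \<otimes> s" by (rule s_rn)
  have "r [^] (- int n) = r [^] (- int n) \<otimes> (s \<otimes> s)" by (simp add: ss)
  also have "\<dots> = (s \<otimes> r [^] n) \<otimes> s" by (simp add: h m_assoc s_in)
  finally have h2: "r [^] (- int n) = s \<otimes> r [^] n \<otimes> s" .
  have "s \<otimes> r [^] (- int n) = (s \<otimes> s) \<otimes> r [^] n \<otimes> s" by (simp add: h2 m_assoc s_in)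
  also have "\<dots> = r [^] n \<otimes> s" by (simp add: ss)
  finally show ?thesis using k by (simp add: int_pow_int)
qed

lemma E_mult: "E k b \<otimes> E k' b' = E (if b then k - k' else k + k') (b \<noteq> b')"
proof (cases b)
  case True
  have "E k b \<otimes> E k' b' = r [^] k \<otimes> (s \<otimes> r [^] k') \<otimes> (if b' then s else \<one>)"
    using True by (simp add: E_def m_assoc s_in)
  also have "\<dots> = r [^] k \<otimes> r [^] (- k') \<otimes> (s \<otimes> (if b' then s else \<one>))"
    by (simp add: s_rk m_assoc s_in)
  also have "r [^] k \<otimes> r [^] (- k') = r [^] (k - k')"
    using int_pow_mult[OF r_in, of k "- k'"] by simp
  finally show ?thesis using True by (auto simp: E_def ss s_in)
next
  case False
  have "E k b \<otimes> E k' b' = (r [^] k \<otimes> r [^] k') \<otimes> (if b' then s else \<one>)"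
    using False by (simp add: E_def m_assoc s_in)
  also have "r [^] k \<otimes> r [^] k' = r [^] (k + k')" by (simp add: int_pow_mult)
  finally show ?thesis using False by (auto simp: E_def)
qed

lemma E_one: "E 0 False = \<one>" by (simp add: E_def)
lemma E_s: "E 0 True = s" by (simp add: E_def s_in)
lemma E_t: "E (-1) True = t"
proof -
  have "E (-1) True = inv r \<otimes> s" by (simp add: E_def int_pow_neg)
  also have "\<dots> = s \<otimes> r" by (simp add: s_r)
  also have "\<dots> = t" by (simp add: r_def ss s_in t_in flip: m_assoc)
  finally show ?thesis .
qed

lemma r_m: "r [^] (int m) = \<one>" using rm by (simp add: int_pow_int r_def)

lemma r_mod: "r [^] (k mod int m) = r [^] k"
proof -
  have "r [^] k = r [^] (int m * (k div int m) + k mod int m)" by simp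
  also have "\<dots> = r [^] (int m * (k div int m)) \<otimes> r [^] (k mod int m)"
    by (rule int_pow_mult) simp
  also have "r [^] (int m * (k div int m)) = (r [^] (int m)) [^] (k div int m)"
    by (rule int_pow_pow[symmetric]) simp
  finally show ?thesis by (simp add: r_m)
qed

lemma E_mod: "E (k mod int m) b = E k b" by (simp add: E_def r_mod)

lemma r_eq_one: "r [^] k = \<one> \<longleftrightarrow> k mod int m = 0"
proof
  assume "r [^] k = \<one>"
  hence "r [^] (k mod int m) = \<one>" using r_mod by simp
  moreover have "k mod int m \<ge> 0" using m2 by simp
  moreover have "r [^] (nat (k mod int m)) = r [^] (int (nat (k mod int m)))" by (simp only: int_pow_int)
  ultimately have "r [^] (nat (k mod int m)) = \<one>" by simp
  moreover have "nat (k mod int m) < m" using m2 by (simp add: nat_less_iff)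
  ultimately have "nat (k mod int m) = 0" using rk unfolding r_def by (meson not_gr_zero)
  thus "k mod int m = 0" using \<open>k mod int m \<ge> 0\<close> by simp
next
  assume "k mod int m = 0" thus "r [^] k = \<one>" using r_mod[of k] by simp
qed


lemma E_inv: "inv (E k b) = E (if b then k else - k) b"
proof (rule inv_equality)
  show "E (if b then k else - k) b \<otimes> E k b = \<one>" by (simp add: E_mult E_one)
qed auto

lemma r_ne_s: "r [^] (k::int) \<noteq> s"
proof
  assume h: "r [^] k = s"
  have "s \<otimes> r = r \<otimes> s"
  proof -
    have "r [^] k \<otimes> r [^] (1::int) = r [^] (1::int) \<otimes> r [^] k"
      using int_pow_mult[OF r_in, of k 1] int_pow_mult[OF r_in, of 1 k] by (simp add: add.commute)
    thus ?thesis using h by simp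
  qed
  hence "r \<otimes> s = inv r \<otimes> s" using s_r by simp
  hence "r = inv r" using s_in by simp
  hence "r \<otimes> r = r \<otimes> inv r" by (rule arg_cong[where f="\<lambda>x. r \<otimes> x"])
  also have "\<dots> = \<one>" by simp
  finally have "r \<otimes> r = \<one>" .
  hence "r [^] (2::int) = \<one>"
    using int_pow_mult[OF r_in, of 1 1] by simp
  hence "2 mod int m = 0" by (simp add: r_eq_one)
  hence "int m dvd 2" by (simp add: dvd_eq_mod_eq_0)
  hence "int m \<le> 2" by (rule zdvd_imp_le) simp
  hence m2': "m = 2" using m2 by simp
  have rk2: "r [^] (k mod 2) = s" using h r_mod[of k] m2' by simp
  have "k mod 2 = 0 \<or> k mod 2 = 1" by presburger
  thus False
  proof
    assume "k mod 2 = 0" thus False using rk2 s1 by simp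
  next
    assume "k mod 2 = 1"
    hence "r = s" using rk2 by simp
    hence "s \<otimes> t = s \<otimes> \<one>" unfolding r_def using s_in by simp
    hence "t = \<one>" using s_in t_in by simp
    thus False using t1 by simp
  qed
qed

lemma E_eq_one: "E k b = \<one> \<longleftrightarrow> \<not> b \<and> k mod int m = 0"
proof (cases b)
  case True
  have "r [^] k \<otimes> s \<noteq> \<one>"
  proof
    assume "r [^] k \<otimes> s = \<one>"
    hence "r [^] k = inv s" using s_in by (simp add: inv_equality[symmetric])
    thus False using r_ne_s inv_s by simp
  qed
  thus ?thesis using True by (simp add: E_def)
qed (simp add: E_def r_eq_one)

lemma E_inj: "E k b = E k' b' \<longleftrightarrow> b = b' \<and> k mod int m = k' mod int m"
proof -
  have "E k b = E k' b' \<longleftrightarrow> inv (E k' b') \<otimes> E k b = \<one>"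
    using inv_solve_left'[of "\<one>" "E k' b'" "E k b"] by auto
  also have "\<dots> \<longleftrightarrow> b = b' \<and> (if b' then k' - k else - k' + k) mod int m = 0"
    by (auto simp: E_inv E_mult E_eq_one)
  also have "(if b' then k' - k else - k' + k) mod int m = 0 \<longleftrightarrow> k mod int m = k' mod int m"
  proof -
    have "(k' - k) mod int m = 0 \<longleftrightarrow> k mod int m = k' mod int m"
      by (simp add: mod_eq_dvd_iff mod_eq_0_iff_dvd dvd_diff_commute)
    moreover have "- k' + k = k - k'" by simp
    moreover have "(k - k') mod int m = 0 \<longleftrightarrow> k mod int m = k' mod int m"
      by (simp add: mod_eq_dvd_iff mod_eq_0_iff_dvd)
    ultimately show ?thesis by (cases b') auto
  qed
  finally show ?thesis .
qed

lemma carrier_E: "x \<in> carrier G \<Longrightarrow> \<exists>k b. x = E k b"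
proof -
  assume "x \<in> carrier G"
  hence "x \<in> generate G {s, t}" using gen by simp
  thus ?thesis
  proof (induct rule: generate.induct)
    case one thus ?case using E_one by metis
  next
    case (incl h)
    hence "h = E 0 True \<or> h = E (-1) True" using E_s E_t by auto
    thus ?case by blast
  next
    case (inv h)
    hence "inv h = E 0 True \<or> inv h = E (-1) True" using E_s E_t inv_s inv_t by auto
    thus ?case by blast
  next
    case (eng h1 h2) thus ?case using E_mult by metis
  qed
qed

lemma carrier_E': "x \<in> carrier G \<Longrightarrow> \<exists>j b. 0 \<le> j \<and> j < int m \<and> x = E j b"
proof -
  assume "x \<in> carrier G"
  then obtain k b where "x = E k b" using carrier_E by blast
  thus ?thesis using E_mod[of k b] m2 by (intro exI[of _ "k mod int m"] exI[of _ b]) auto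
qed

lemma carrier_eq: "carrier G = (\<lambda>(j, b). E (int j) b) ` ({..<m} \<times> UNIV)"
proof
  show "carrier G \<subseteq> (\<lambda>(j, b). E (int j) b) ` ({..<m} \<times> UNIV)"
  proof
    fix x assume "x \<in> carrier G"
    then obtain j b where j: "0 \<le> j" "j < int m" "x = E j b" using carrier_E' by blast
    hence "x = (\<lambda>(j, b). E (int j) b) (nat j, b)" by simp
    moreover have "(nat j, b) \<in> {..<m} \<times> UNIV" using j by auto
    ultimately show "x \<in> (\<lambda>(j, b). E (int j) b) ` ({..<m} \<times> UNIV)" by blast
  qed
qed auto

lemma card_carrier: "card (carrier G) = 2 * m"
proof -
  have "inj_on (\<lambda>(j, b). E (int j) b) ({..<m} \<times> UNIV)"
    by (auto simp: inj_on_def E_inj)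
  hence "card (carrier G) = card ({..<m} \<times> (UNIV :: bool set))"
    unfolding carrier_eq by (rule card_image)
  thus ?thesis by (simp add: card_cartesian_product)
qed

lemma fin_carrier[simp]: "finite (carrier G)"
  unfolding carrier_eq by auto


definition Ln :: "int \<Rightarrow> bool \<Rightarrow> int" where
  "Ln j b = (if b then LT (int m) j else LF (int m) j)"
abbreviation sj where "sj \<equiv> SJ (int m)"
abbreviation tj where "tj \<equiv> TJ (int m)"

lemma E_norm_eq: "0 \<le> j \<Longrightarrow> j < int m \<Longrightarrow> 0 \<le> j' \<Longrightarrow> j' < int m \<Longrightarrow>
  E j b = E j' b' \<longleftrightarrow> j = j' \<and> b = b'"
  by (auto simp: E_inj)

lemma sE: "s \<otimes> E k b = E (- k) (\<not> b)"
  using E_mult[of 0 True k b] by (simp add: E_s)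
lemma tE: "t \<otimes> E k b = E (- 1 - k) (\<not> b)"
  using E_mult[of "-1" True k b] by (simp add: E_t)

lemma sE': "0 \<le> j \<Longrightarrow> j < int m \<Longrightarrow> s \<otimes> E j b = E (sj j) (\<not> b)"
proof -
  assume j: "0 \<le> j" "j < int m"
  have "E (- j) (\<not> b) = E (- j + int m) (\<not> b)" by (simp add: E_inj)
  thus ?thesis using j by (cases "j = 0") (simp_all add: sE SJ_def)
qed

lemma tE': "0 \<le> j \<Longrightarrow> j < int m \<Longrightarrow> t \<otimes> E j b = E (tj j) (\<not> b)"
proof -
  assume j: "0 \<le> j" "j < int m"
  have "E (- 1 - j) (\<not> b) = E (- 1 - j + int m) (\<not> b)" by (simp add: E_inj)
  moreover have "- 1 - j + int m = tj j" by (simp add: TJ_def)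
  ultimately show ?thesis by (simp add: tE)
qed

lemma m2i: "int m \<ge> 2" using m2 by simp

lemma sj_range: "0 \<le> j \<Longrightarrow> j < int m \<Longrightarrow> 0 \<le> sj j \<and> sj j < int m \<and> sj (sj j) = j"
  using sjr m2i by blast
lemma tj_range: "0 \<le> j \<Longrightarrow> j < int m \<Longrightarrow> 0 \<le> tj j \<and> tj j < int m \<and> tj (tj j) = j"
  using tjr m2i by blast

lemma A1s: "0 \<le> j \<Longrightarrow> j < int m \<Longrightarrow> Ln (sj j) (\<not> b) = Ln j b + 1 \<or> Ln (sj j) (\<not> b) = Ln j b - 1"
  using a1s[OF _ _ m2i] a1s'[OF _ _ m2i] by (cases b) (simp_all add: Ln_def)
lemma A1t: "0 \<le> j \<Longrightarrow> j < int m \<Longrightarrow> Ln (tj j) (\<not> b) = Ln j b + 1 \<or> Ln (tj j) (\<not> b) = Ln j b - 1"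
  using a1t[OF _ _ m2i] a1t'[OF _ _ m2i] by (cases b) (simp_all add: Ln_def)
lemma A0: "0 \<le> j \<Longrightarrow> j < int m \<Longrightarrow> 0 \<le> Ln j b"
  using a0[OF _ _ m2i] by (cases b) (simp_all add: Ln_def less_imp_le)
lemma A2: assumes "0 \<le> j" "j < int m" shows "Ln j b = 0 \<longleftrightarrow> j = 0 \<and> \<not> b"
  using a0[OF assms m2i] a2[OF assms m2i] by (cases b) (auto simp add: Ln_def)
lemma A3: "0 \<le> j \<Longrightarrow> j < int m \<Longrightarrow> 0 < Ln j b \<Longrightarrow> Ln (sj j) (\<not> b) < Ln j b \<or> Ln (tj j) (\<not> b) < Ln j b"
  using a3[OF _ _ m2i] a3'[OF _ _ m2i] by (cases b) (simp_all add: Ln_def)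

lemma foldr_in: "set ws \<subseteq> {s, t} \<Longrightarrow> foldr (\<otimes>) ws \<one> \<in> carrier G"
  by (induct ws) (auto simp: s_in t_in)

lemma len_lower: "set ws \<subseteq> {s, t} \<Longrightarrow> 0 \<le> j \<Longrightarrow> j < int m \<Longrightarrow> foldr (\<otimes>) ws \<one> = E j b
   \<Longrightarrow> Ln j b \<le> int (length ws)"
proof (induct ws arbitrary: j b)
  case Nil
  hence "E j b = E 0 False" by (simp add: E_one)
  hence "j = 0 \<and> b = False" using Nil m2 by (subst (asm) E_norm_eq) auto
  thus ?case by (simp add: Ln_def LF_def)
next
  case (Cons g ws)
  have "foldr (\<otimes>) ws \<one> \<in> carrier G" using Cons foldr_in by simp
  then obtain j' b' where j': "0 \<le> j'" "j' < int m" "foldr (\<otimes>) ws \<one> = E j' b'"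
    using carrier_E' by blast
  have IH: "Ln j' b' \<le> int (length ws)" using Cons j' by simp
  have g: "g = s \<or> g = t" using Cons by simp
  thus ?case
  proof
    assume gs: "g = s"
    hence "E j b = E (sj j') (\<not> b')" using Cons j' sE' by simp
    hence "j = sj j' \<and> b = (\<not> b')" using E_norm_eq[of j "sj j'" b "\<not> b'"] sj_range[OF j'(1,2)] Cons.prems by simp
    thus ?case using A1s[OF j'(1,2), of b'] IH by auto
  next
    assume gs: "g = t"
    hence "E j b = E (tj j') (\<not> b')" using Cons j' tE' by simp
    hence "j = tj j' \<and> b = (\<not> b')" using E_norm_eq[of j "tj j'" b "\<not> b'"] tj_range[OF j'(1,2)] Cons.prems by simp
    thus ?case using A1t[OF j'(1,2), of b'] IH by auto
  qed
qed

lemma len_upper: "0 \<le> j \<Longrightarrow> j < int m \<Longrightarrow> Ln j b = int n \<Longrightarrow>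
   \<exists>ws. set ws \<subseteq> {s, t} \<and> length ws = n \<and> foldr (\<otimes>) ws \<one> = E j b"
proof (induct n arbitrary: j b)
  case 0
  hence "j = 0 \<and> \<not> b" using A2 by simp
  thus ?case by (intro exI[of _ "[]"]) (simp add: E_one)
next
  case (Suc n)
  hence "Ln (sj j) (\<not> b) < Ln j b \<or> Ln (tj j) (\<not> b) < Ln j b" using A3[of j b] by simp
  thus ?case
  proof
    assume "Ln (sj j) (\<not> b) < Ln j b"
    hence "Ln (sj j) (\<not> b) = int n" using A1s[of j b] Suc by auto
    then obtain ws where ws: "set ws \<subseteq> {s, t}" "length ws = n" "foldr (\<otimes>) ws \<one> = E (sj j) (\<not> b)"
      using Suc.hyps[of "sj j" "\<not> b"] sj_range[of j] Suc.prems by auto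
    have "s \<otimes> E (sj j) (\<not> b) = E j b" using sE'[of "sj j" "\<not> b"] sj_range Suc.prems by simp
    thus ?case using ws by (intro exI[of _ "s # ws"]) auto
  next
    assume "Ln (tj j) (\<not> b) < Ln j b"
    hence "Ln (tj j) (\<not> b) = int n" using A1t[of j b] Suc by auto
    then obtain ws where ws: "set ws \<subseteq> {s, t}" "length ws = n" "foldr (\<otimes>) ws \<one> = E (tj j) (\<not> b)"
      using Suc.hyps[of "tj j" "\<not> b"] tj_range[of j] Suc.prems by auto
    have "t \<otimes> E (tj j) (\<not> b) = E j b" using tE'[of "tj j" "\<not> b"] tj_range Suc.prems by simp
    thus ?case using ws by (intro exI[of _ "t # ws"]) auto
  qed
qed

lemma len_E: "0 \<le> j \<Longrightarrow> j < int m \<Longrightarrow> cox_len G {s, t} (E j b) = nat (Ln j b)"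
  unfolding cox_len_def
proof (rule Least_equality)
  assume j: "0 \<le> j" "j < int m"
  show "\<exists>ws. set ws \<subseteq> {s, t} \<and> length ws = nat (Ln j b) \<and> foldr (\<otimes>) ws \<one> = E j b"
    using len_upper[OF j, of b "nat (Ln j b)"] A0[OF j, of b] by simp
  fix n assume "\<exists>ws. set ws \<subseteq> {s, t} \<and> length ws = n \<and> foldr (\<otimes>) ws \<one> = E j b"
  then obtain ws where "set ws \<subseteq> {s, t}" "length ws = n" "foldr (\<otimes>) ws \<one> = E j b" by blast
  thus "nat (Ln j b) \<le> n" using len_lower[OF _ j] by force
qed

end

context fixes M j :: int assumes jr: "0 \<le> j" "j < M" and M2: "2 \<le> M"
begin
lemma a4: "LT M j \<le> M" "LT M j = M \<longleftrightarrow> 2*j+1 = M" "LF M j \<le> M" "LF M j = M \<longleftrightarrow> 2*j = M"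
  using jr M2 unfolding LT_def LF_def min_def by presburger+
lemma a5: "(LF M (SJ M j) < LT M j \<and> LF M (TJ M j) < LT M j) \<longleftrightarrow> 2*j+1 = M"
          "(LT M (SJ M j) < LF M j \<and> LT M (TJ M j) < LF M j) \<longleftrightarrow> 2*j = M"
  using jr M2 unfolding LT_def LF_def SJ_def TJ_def min_def by presburger+
lemma a6: "\<not> (LT M j < LF M (SJ M j) \<and> LT M j < LF M (TJ M j))"
          "(LF M j < LT M (SJ M j) \<and> LF M j < LT M (TJ M j)) \<longleftrightarrow> j = 0"
  using jr M2 unfolding LT_def LF_def SJ_def TJ_def min_def by presburger+
end

lemma dvd_range: assumes M: "0 < (M::int)" and a: "- 2 * M < a" "a \<le> 2 * M"
  shows "M dvd a \<longleftrightarrow> a = - M \<or> a = 0 \<or> a = M \<or> a = 2 * M"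
proof
  assume "M dvd a"
  then obtain q where q: "a = M * q" by (auto elim: dvdE)
  have "q > -2"
  proof (rule ccontr)
    assume "\<not> q > -2" hence "q \<le> -2" by simp
    hence "M * q \<le> M * (-2)" using M by (intro mult_left_mono) auto
    thus False using a q by simp
  qed
  moreover have "q < 3"
  proof (rule ccontr)
    assume "\<not> q < 3" hence "q \<ge> 3" by simp
    hence "M * q \<ge> M * 3" using M by (intro mult_left_mono) auto
    thus False using a q M by simp
  qed
  ultimately have "q = -1 \<or> q = 0 \<or> q = 1 \<or> q = 2" by presburger
  thus "a = - M \<or> a = 0 \<or> a = M \<or> a = 2 * M" using q by auto
qed auto

context dih begin

abbreviation len where "len \<equiv> cox_len G {s, t}"

lemma E_m1: "E (-1) b = E (int m - 1) b" by (simp add: E_inj)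

lemma s_ne_t: "s \<noteq> t"
proof
  assume "s = t"
  hence "E 0 True = E (int m - 1) True" using E_s E_t E_m1 by simp
  thus False using m2 by (subst (asm) E_norm_eq) auto
qed

lemma lenE_s: "0 \<le> j \<Longrightarrow> j < int m \<Longrightarrow> len (s \<otimes> E j b) = nat (Ln (sj j) (\<not> b))"
  using sE' sj_range len_E by simp
lemma lenE_t: "0 \<le> j \<Longrightarrow> j < int m \<Longrightarrow> len (t \<otimes> E j b) = nat (Ln (tj j) (\<not> b))"
  using tE' tj_range len_E by simp

lemma asc_s: assumes "0 \<le> j" "j < int m" shows "(len (E j b) < len (s \<otimes> E j b)) \<longleftrightarrow> Ln j b < Ln (sj j) (\<not> b)"
proof -
  have "0 \<le> Ln j b" using A0 assms by simp
  thus ?thesis using lenE_s[OF assms] len_E[OF assms] by (auto simp add: nat_less_eq_zless)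
qed
lemma asc_t: assumes "0 \<le> j" "j < int m" shows "(len (E j b) < len (t \<otimes> E j b)) \<longleftrightarrow> Ln j b < Ln (tj j) (\<not> b)"
proof -
  have "0 \<le> Ln j b" using A0 assms by simp
  thus ?thesis using lenE_t[OF assms] len_E[OF assms] by (auto simp add: nat_less_eq_zless)
qed

lemma len_s: "len s = 1"
proof -
  have "len (E 0 True) = nat (Ln 0 True)" using len_E m2 by simp
  thus ?thesis using E_s m2 by (simp add: Ln_def LT_def)
qed
lemma len_t: "len t = 1"
proof -
  have "len (E (int m - 1) True) = nat (Ln (int m - 1) True)" using len_E m2 by simp
  thus ?thesis using E_t E_m1 m2 by (simp add: Ln_def LT_def)
qed
lemma len_one: "len \<one> = 0"
proof -
  have "len (E 0 False) = nat (Ln 0 False)" using len_E m2 by simp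
  thus ?thesis using E_one by (simp add: Ln_def LF_def)
qed

definition w0 where "w0 = E (int m div 2) (odd m)"

lemma w0_in[simp]: "w0 \<in> carrier G" by (simp add: w0_def)
lemma w0_range: "0 \<le> int m div 2" "int m div 2 < int m" using m2 by auto

lemma len_max: "x \<in> carrier G \<Longrightarrow> len x \<le> m \<and> (len x = m \<longleftrightarrow> x = w0)"
proof -
  assume "x \<in> carrier G"
  then obtain j b where j: "0 \<le> j" "j < int m" "x = E j b" using carrier_E' by blast
  have w: "x = w0 \<longleftrightarrow> j = int m div 2 \<and> b = odd m"
    unfolding w0_def j(3) using E_norm_eq[OF j(1,2) w0_range] by simp
  have "Ln j b \<le> int m \<and> (Ln j b = int m \<longleftrightarrow> j = int m div 2 \<and> b = odd m)"
    using a4[OF j(1,2) m2i] by (cases b) (auto simp: Ln_def, presburger+)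
  thus ?thesis using w j len_E A0[OF j(1,2), of b] by auto
qed

lemma longest: "longest_elt G {s, t} = w0"
  unfolding longest_elt_def
proof (rule the_equality)
  have lw: "len w0 = m" using len_max[OF w0_in] by simp
  show "w0 \<in> carrier G \<and> (\<forall>v\<in>carrier G. len v \<le> len w0)"
    using len_max w0_in unfolding lw by auto
  fix w assume "w \<in> carrier G \<and> (\<forall>v\<in>carrier G. len v \<le> len w)"
  hence w: "w \<in> carrier G" "len w0 \<le> len w" using w0_in by auto
  have "len w0 = m" using len_max[OF w0_in] by simp
  thus "w = w0" using len_max[OF w(1)] w(2) by (metis le_antisym)
qed

lemma w0_ne_one: "w0 \<noteq> \<one>"
  using len_max[OF w0_in] len_one m2 by auto

lemma w0_inv: "w0 \<otimes> w0 = \<one>"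
proof (cases "odd m")
  case True thus ?thesis by (simp add: w0_def E_mult E_one)
next
  case False
  hence "int m = 2 * (int m div 2)" by presburger
  hence "(int m div 2 + int m div 2) mod int m = 0" by (metis mod_self mult_2)
  thus ?thesis using False by (simp add: w0_def E_mult E_eq_one)
qed

lemma inv_w0: "inv w0 = w0" using w0_inv by (simp add: inv_equality)

end

context fixes M j :: int assumes jr: "0 \<le> j" "j < M" and M2: "2 \<le> M"
begin
lemma a7F: "(LF M j < LT M (SJ M j) \<and> (M dvd (- j - j) \<or> M dvd (- j - j + 1)))
   \<longleftrightarrow> (j = 0 \<or> (j = (M + 1) div 2 \<and> odd M))"
proof -
  have d1: "M dvd (- j - j) \<longleftrightarrow> (- j - j = - M \<or> - j - j = 0 \<or> - j - j = M \<or> - j - j = 2 * M)"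
    by (rule dvd_range) (use jr M2 in auto)
  have d2: "M dvd (- j - j + 1) \<longleftrightarrow> (- j - j + 1 = - M \<or> - j - j + 1 = 0 \<or> - j - j + 1 = M \<or> - j - j + 1 = 2 * M)"
    by (rule dvd_range) (use jr M2 in auto)
  show ?thesis unfolding d1 d2 LT_def LF_def SJ_def min_def using jr M2 by (auto split: if_split_asm; presburger)
qed
lemma a7T: "(LT M j < LF M (SJ M j) \<and> (M dvd (j + j) \<or> M dvd (j + j + 1)))
   \<longleftrightarrow> (j = (M + 1) div 2 \<and> even M)"
proof -
  have d1: "M dvd (j + j) \<longleftrightarrow> (j + j = - M \<or> j + j = 0 \<or> j + j = M \<or> j + j = 2 * M)"
    by (rule dvd_range) (use jr M2 in auto)
  have d2: "M dvd (j + j + 1) \<longleftrightarrow> (j + j + 1 = - M \<or> j + j + 1 = 0 \<or> j + j + 1 = M \<or> j + j + 1 = 2 * M)"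
    by (rule dvd_range) (use jr M2 in auto)
  show ?thesis unfolding d1 d2 LT_def LF_def SJ_def min_def using jr M2 by (auto split: if_split_asm; presburger)
qed
lemma a8F: "(LF M j < LT M (TJ M j) \<and> (M dvd (- j - 1 - j) \<or> M dvd (- j - 1 - j + 1)))
   \<longleftrightarrow> (j = 0 \<or> (j = (M - 1) div 2 \<and> odd M))"
proof -
  have d1: "M dvd (- j - 1 - j) \<longleftrightarrow> (- j - 1 - j = - M \<or> - j - 1 - j = 0 \<or> - j - 1 - j = M \<or> - j - 1 - j = 2 * M)"
    by (rule dvd_range) (use jr M2 in auto)
  have d2: "M dvd (- j - 1 - j + 1) \<longleftrightarrow> (- j - 1 - j + 1 = - M \<or> - j - 1 - j + 1 = 0 \<or> - j - 1 - j + 1 = M \<or> - j - 1 - j + 1 = 2 * M)"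
    by (rule dvd_range) (use jr M2 in auto)
  show ?thesis unfolding d1 d2 LT_def LF_def TJ_def min_def using jr M2 by (auto split: if_split_asm; presburger)
qed
lemma a8T: "(LT M j < LF M (TJ M j) \<and> (M dvd (j + 1 + j) \<or> M dvd (j + 1 + j + 1)))
   \<longleftrightarrow> (j = (M - 1) div 2 \<and> even M)"
proof -
  have d1: "M dvd (j + 1 + j) \<longleftrightarrow> (j + 1 + j = - M \<or> j + 1 + j = 0 \<or> j + 1 + j = M \<or> j + 1 + j = 2 * M)"
    by (rule dvd_range) (use jr M2 in auto)
  have d2: "M dvd (j + 1 + j + 1) \<longleftrightarrow> (j + 1 + j + 1 = - M \<or> j + 1 + j + 1 = 0 \<or> j + 1 + j + 1 = M \<or> j + 1 + j + 1 = 2 * M)"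
    by (rule dvd_range) (use jr M2 in auto)
  show ?thesis unfolding d1 d2 LT_def LF_def TJ_def min_def using jr M2 by (auto split: if_split_asm; presburger)
qed
end


context dih begin

abbreviation "SS \<equiv> {s, t}"

lemma X_sub: "X_set G SS J \<subseteq> carrier G" by (auto simp: X_set_def)

lemma x_elt_val:
  "x_elt G S J = (\<lambda>y. if y \<in> carrier G \<and> inv y \<in> X_set G S J then 1 else 0)"
proof
  fix y
  have Xc: "X_set G S J \<subseteq> carrier G" by (auto simp: X_set_def)
  hence fin: "finite (X_set G S J)" using fin_carrier finite_subset by blast
  have "x_elt G S J y = (\<Sum>x\<in>X_set G S J. gdelta (inv x) y)"
    unfolding x_elt_def by (rule fsum_apply)
  also have "\<dots> = (if y \<in> carrier G \<and> inv y \<in> X_set G S J then 1 else 0)"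
  proof (cases "y \<in> carrier G")
    case True
    have "(\<Sum>x\<in>X_set G S J. gdelta (inv x) y) = (\<Sum>x\<in>X_set G S J. if x = inv y then 1 else 0)"
    proof (rule sum.cong[OF refl])
      fix x assume "x \<in> X_set G S J"
      hence xc: "x \<in> carrier G" using Xc by auto
      have "y = inv x \<longleftrightarrow> x = inv y" using xc True by (metis inv_inv)
      thus "gdelta (inv x) y = (if x = inv y then 1 else 0)" by (simp add: gdelta_def)
    qed
    also have "\<dots> = (if inv y \<in> X_set G S J then 1 else 0)" using fin by (simp add: sum.delta')
    finally show ?thesis using True by simp
  next
    case False
    have "\<And>x. x \<in> X_set G S J \<Longrightarrow> gdelta (inv x) y = 0"
      using False Xc by (auto simp: gdelta_def)
    thus ?thesis using False by simp
  qed
  finally show "x_elt G S J y = (if y \<in> carrier G \<and> inv y \<in> X_set G S J then 1 else 0)" .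
qed

lemma X_empty: "X_set G SS {} = carrier G" by (auto simp: X_set_def)

lemma asc_sE: assumes "0 \<le> j" "j < int m"
  shows "E j b \<in> X_set G SS {s} \<longleftrightarrow> Ln j b < Ln (sj j) (\<not> b)"
  using asc_s[OF assms] by (simp add: X_set_def)
lemma asc_tE: assumes "0 \<le> j" "j < int m"
  shows "E j b \<in> X_set G SS {t} \<longleftrightarrow> Ln j b < Ln (tj j) (\<not> b)"
  using asc_t[OF assms] by (simp add: X_set_def)

lemma X_SS: "X_set G SS SS = {\<one>}"
proof
  show "X_set G SS SS \<subseteq> {\<one>}"
  proof
    fix x assume x: "x \<in> X_set G SS SS"
    hence "x \<in> carrier G" by (simp add: X_set_def)
    then obtain j b where j: "0 \<le> j" "j < int m" "x = E j b" using carrier_E' by blast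
    have "x \<in> X_set G SS {s}" "x \<in> X_set G SS {t}" using x by (auto simp: X_set_def)
    hence "Ln j b < Ln (sj j) (\<not> b)" "Ln j b < Ln (tj j) (\<not> b)" using asc_sE asc_tE j by auto
    hence "j = 0 \<and> \<not> b" using a6[OF j(1,2) m2i] by (cases b) (auto simp: Ln_def)
    thus "x \<in> {\<one>}" using j E_one by simp
  qed
  show "{\<one>} \<subseteq> X_set G SS SS"
    using len_s len_t len_one s_in t_in by (auto simp: X_set_def)
qed

lemma len_ne: assumes "x \<in> carrier G" "g \<in> SS" shows "len (g \<otimes> x) \<noteq> len x"
proof -
  obtain j b where j: "0 \<le> j" "j < int m" "x = E j b" using carrier_E' assms(1) by blast
  show ?thesis
  proof (cases "g = s")
    case True
    thus ?thesis using lenE_s[OF j(1,2)] len_E[OF j(1,2)] A1s[OF j(1,2), of b] A0[OF j(1,2), of b] j(3)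
        A0[of "sj j" "\<not> b"] sj_range[OF j(1,2)] by auto
  next
    case False
    hence "g = t" using assms by simp
    thus ?thesis using lenE_t[OF j(1,2)] len_E[OF j(1,2)] A1t[OF j(1,2), of b] A0[OF j(1,2), of b] j(3)
        A0[of "tj j" "\<not> b"] tj_range[OF j(1,2)] by auto
  qed
qed

lemma card_X1: assumes g: "g \<in> SS" shows "card (X_set G SS {g}) = m"
proof -
  let ?A = "X_set G SS {g}"
  have gc: "g \<in> carrier G" "g \<otimes> g = \<one>" using g s_in t_in ss tt by auto
  have A: "?A = {x \<in> carrier G. len x < len (g \<otimes> x)}" by (auto simp: X_set_def)
  have gg: "\<And>x. x \<in> carrier G \<Longrightarrow> g \<otimes> (g \<otimes> x) = x" using gc by (simp flip: m_assoc)
  have compl: "carrier G - ?A = (\<lambda>x. g \<otimes> x) ` ?A"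
  proof
    show "carrier G - ?A \<subseteq> (\<lambda>x. g \<otimes> x) ` ?A"
    proof
      fix x assume x: "x \<in> carrier G - ?A"
      hence xc: "x \<in> carrier G" and "\<not> len x < len (g \<otimes> x)" using A by auto
      hence "len (g \<otimes> x) < len x" using len_ne[OF xc g] by simp
      hence "g \<otimes> x \<in> ?A" unfolding A using gg[OF xc] gc xc by simp
      moreover have "x = g \<otimes> (g \<otimes> x)" using gg xc by simp
      ultimately show "x \<in> (\<lambda>x. g \<otimes> x) ` ?A" by blast
    qed
    show "(\<lambda>x. g \<otimes> x) ` ?A \<subseteq> carrier G - ?A"
    proof
      fix y assume "y \<in> (\<lambda>x. g \<otimes> x) ` ?A"
      then obtain x where x: "x \<in> ?A" "y = g \<otimes> x" by blast
      hence xc: "x \<in> carrier G" and lt: "len x < len (g \<otimes> x)" using A by auto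
      have "\<not> len y < len (g \<otimes> y)" using x(2) gg[OF xc] lt by simp
      thus "y \<in> carrier G - ?A" using A x(2) xc gc by simp
    qed
  qed
  have inj: "inj_on (\<lambda>x. g \<otimes> x) ?A"
  proof (rule inj_onI)
    fix x y assume xy: "x \<in> ?A" "y \<in> ?A" "g \<otimes> x = g \<otimes> y"
    hence c: "x \<in> carrier G" "y \<in> carrier G" using X_sub by auto
    have "x = g \<otimes> (g \<otimes> x)" using gg c by simp
    also have "\<dots> = y" using xy(3) gg c by simp
    finally show "x = y" .
  qed
  have "card (carrier G) = card ?A + card (carrier G - ?A)"
    using X_sub fin_carrier by (metis card_Diff_subset card_mono diff_add_inverse2 finite_subset le_add_diff_inverse)
  also have "card (carrier G - ?A) = card ?A" unfolding compl using card_image[OF inj] .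
  finally show ?thesis using card_carrier by simp
qed


lemma conj_s: "inv (E j b) \<otimes> s \<otimes> E j b = E (if b then j + j else - j - j) True"
proof -
  have "inv (E j b) \<otimes> s \<otimes> E j b = inv (E j b) \<otimes> E 0 True \<otimes> E j b" by (simp add: E_s)
  also have "\<dots> = E (if b then j + j else - j - j) True" by (cases b) (simp_all add: E_inv E_mult)
  finally show ?thesis .
qed
lemma conj_t: "inv (E j b) \<otimes> t \<otimes> E j b = E (if b then j + 1 + j else - j - 1 - j) True"
proof -
  have "inv (E j b) \<otimes> t \<otimes> E j b = inv (E j b) \<otimes> E (-1) True \<otimes> E j b" by (simp add: E_t)
  also have "\<dots> = E (if b then j + 1 + j else - j - 1 - j) True" by (cases b) (simp_all add: E_inv E_mult)
  finally show ?thesis .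
qed

lemma inSS: "E c True \<in> SS \<longleftrightarrow> int m dvd c \<or> int m dvd (c + 1)"
proof -
  have "E c True = s \<longleftrightarrow> E c True = E 0 True" using E_s by simp
  also have "\<dots> \<longleftrightarrow> c mod int m = 0" by (simp add: E_inj)
  also have "\<dots> \<longleftrightarrow> int m dvd c" by (rule mod_eq_0_iff_dvd)
  finally have 1: "E c True = s \<longleftrightarrow> int m dvd c" .
  have "E c True = t \<longleftrightarrow> E c True = E (-1) True" using E_t by simp
  also have "\<dots> \<longleftrightarrow> c mod int m = (-1) mod int m" by (simp add: E_inj)
  also have "\<dots> \<longleftrightarrow> int m dvd (c - (-1))" by (rule mod_eq_dvd_iff)
  finally have 2: "E c True = t \<longleftrightarrow> int m dvd (c + 1)" by simp
  show ?thesis using 1 2 by blast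
qed

lemma memXs: assumes j: "0 \<le> j" "j < int m"
  shows "E j b \<in> X_set G SS {s} \<inter> X_sharp G SS {s} \<longleftrightarrow>
    (b \<and> j = (int m + 1) div 2 \<and> even (int m)) \<or> (\<not> b \<and> (j = 0 \<or> (j = (int m + 1) div 2 \<and> odd (int m))))"
proof -
  have "E j b \<in> X_set G SS {s} \<inter> X_sharp G SS {s} \<longleftrightarrow>
      Ln j b < Ln (sj j) (\<not> b) \<and> inv (E j b) \<otimes> s \<otimes> E j b \<in> SS"
    using asc_sE[OF j] by (auto simp: X_sharp_def)
  also have "\<dots> \<longleftrightarrow> Ln j b < Ln (sj j) (\<not> b) \<and>
      (int m dvd (if b then j + j else - j - j) \<or> int m dvd ((if b then j + j else - j - j) + 1))"
    by (simp only: conj_s inSS)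
  also have "\<dots> \<longleftrightarrow> (b \<and> j = (int m + 1) div 2 \<and> even (int m)) \<or> (\<not> b \<and> (j = 0 \<or> (j = (int m + 1) div 2 \<and> odd (int m))))"
    using a7F[OF j m2i] a7T[OF j m2i] by (cases b) (simp_all add: Ln_def)
  finally show ?thesis .
qed

lemma memXt: assumes j: "0 \<le> j" "j < int m"
  shows "E j b \<in> X_set G SS {t} \<inter> X_sharp G SS {t} \<longleftrightarrow>
    (b \<and> j = (int m - 1) div 2 \<and> even (int m)) \<or> (\<not> b \<and> (j = 0 \<or> (j = (int m - 1) div 2 \<and> odd (int m))))"
proof -
  have "E j b \<in> X_set G SS {t} \<inter> X_sharp G SS {t} \<longleftrightarrow>
      Ln j b < Ln (tj j) (\<not> b) \<and> inv (E j b) \<otimes> t \<otimes> E j b \<in> SS"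
    using asc_tE[OF j] by (auto simp: X_sharp_def)
  also have "\<dots> \<longleftrightarrow> Ln j b < Ln (tj j) (\<not> b) \<and>
      (int m dvd (if b then j + 1 + j else - j - 1 - j) \<or> int m dvd ((if b then j + 1 + j else - j - 1 - j) + 1))"
    by (simp only: conj_t inSS)
  also have "\<dots> \<longleftrightarrow> (b \<and> j = (int m - 1) div 2 \<and> even (int m)) \<or> (\<not> b \<and> (j = 0 \<or> (j = (int m - 1) div 2 \<and> odd (int m))))"
    using a8F[OF j m2i] a8T[OF j m2i] by (cases b) (simp_all add: Ln_def)
  finally show ?thesis .
qed

lemma card_two: assumes j: "0 \<le> j" "j < int m" "0 < j \<or> even (int m)"
  and c: "\<And>j' b'. 0 \<le> j' \<Longrightarrow> j' < int m \<Longrightarrow>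
     E j' b' \<in> A \<longleftrightarrow> (b' \<and> j' = j \<and> even (int m)) \<or> (\<not> b' \<and> (j' = 0 \<or> (j' = j \<and> odd (int m))))"
  and Ac: "A \<subseteq> carrier G"
  shows "card A = 2"
proof -
  have "A = {E 0 False, E j (even (int m))}"
  proof
    show "A \<subseteq> {E 0 False, E j (even (int m))}"
    proof
      fix x assume x: "x \<in> A"
      then obtain j' b' where j': "0 \<le> j'" "j' < int m" "x = E j' b'" using Ac carrier_E' by blast
      have "(b' \<and> j' = j \<and> even (int m)) \<or> (\<not> b' \<and> (j' = 0 \<or> (j' = j \<and> odd (int m))))"
        using c[OF j'(1,2), of b'] x j'(3) by simp
      thus "x \<in> {E 0 False, E j (even (int m))}" using j'(3) by auto
    qed
    have "E 0 False \<in> A" using c[of 0 False] m2 by simp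
    moreover have "E j (even (int m)) \<in> A" using c[OF j(1,2), of "even (int m)"] by (cases "even m") simp_all
    ultimately show "{E 0 False, E j (even (int m))} \<subseteq> A" by simp
  qed
  moreover have "E 0 False \<noteq> E j (even (int m))"
    using E_norm_eq[of 0 j False "even (int m)"] j m2 by auto
  ultimately show ?thesis by simp
qed

lemma card_Xss: "card (X_set G SS {s} \<inter> X_sharp G SS {s}) = 2"
proof -
  have r: "0 \<le> (int m + 1) div 2" "(int m + 1) div 2 < int m" "0 < (int m + 1) div 2 \<or> even (int m)"
    using m2i by auto
  show ?thesis
    by (rule card_two[OF r memXs]) (use X_sub in auto)
qed

lemma card_Xtt: "card (X_set G SS {t} \<inter> X_sharp G SS {t}) = 2"
proof -
  have r: "0 \<le> (int m - 1) div 2" "(int m - 1) div 2 < int m" "0 < (int m - 1) div 2 \<or> even (int m)"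
    using m2i by presburger+
  show ?thesis
    by (rule card_two[OF r memXt]) (use X_sub in auto)
qed

end

context dih begin

lemma Xsharp_empty: "X_sharp G SS {} = carrier G"
  by (simp add: X_sharp_def X_empty)

lemma one_Xsharp: assumes L: "L \<subseteq> SS" shows "\<one> \<in> X_sharp G SS L"
proof -
  have "\<one> \<in> X_set G SS L"
  proof -
    have "\<And>r. r \<in> L \<Longrightarrow> len \<one> < len (r \<otimes> \<one>)"
    proof -
      fix r assume "r \<in> L"
      hence "r = s \<or> r = t" using L by auto
      thus "len \<one> < len (r \<otimes> \<one>)" using len_s len_t len_one s_in t_in by auto
    qed
    thus ?thesis by (simp add: X_set_def)
  qed
  moreover have "(\<lambda>r. inv \<one> \<otimes> r \<otimes> \<one>) ` L \<subseteq> SS" using L s_in t_in by auto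
  ultimately show ?thesis by (simp add: X_sharp_def)
qed

lemma mc00: "m_coef G SS {} {} = 2 * m"
  by (simp add: m_coef_def X_empty Xsharp_empty card_carrier)
lemma mcSL: "L \<subseteq> SS \<Longrightarrow> m_coef G SS SS L = 1"
proof -
  assume L: "L \<subseteq> SS"
  have "X_set G SS SS \<inter> X_sharp G SS L = {\<one>}" using X_SS one_Xsharp[OF L] by auto
  thus ?thesis using L by (simp add: m_coef_def)
qed
lemma mcg0: "g \<in> SS \<Longrightarrow> m_coef G SS {g} {} = m"
proof -
  assume g: "g \<in> SS"
  have "X_set G SS {g} \<inter> X_sharp G SS {} = X_set G SS {g}" using X_sub Xsharp_empty by auto
  thus ?thesis using card_X1[OF g] by (simp add: m_coef_def)
qed
lemma mcss: "m_coef G SS {s} {s} = 2" by (simp add: m_coef_def card_Xss)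
lemma mctt: "m_coef G SS {t} {t} = 2" by (simp add: m_coef_def card_Xtt)
lemma mc0: "\<not> L \<subseteq> K \<Longrightarrow> m_coef G SS K L = 0" by (simp add: m_coef_def)

lemma pow_SS: "Pow SS = {{}, {s}, {t}, SS}" by blast

lemma sum_pow: "(\<Sum>L\<in>Pow SS. F L) = F {} + F {s} + F {t} + (F SS :: 'c :: comm_monoid_add)"
proof -
  have d: "{} \<noteq> {s}" "{} \<noteq> {t}" "{} \<noteq> SS" "{s} \<noteq> {t}" "{s} \<noteq> SS" "{t} \<noteq> SS"
    using s_ne_t by auto
  show ?thesis unfolding pow_SS using d by (simp add: add.assoc)
qed

definition N :: complex where "N = of_nat (2 * m)"

definition fam0 :: "'a set \<Rightarrow> 'a \<Rightarrow> complex" where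
  "fam0 L = (if L = {} then (\<lambda>x. x_elt G SS {} x / N)
     else if L = {s} then (\<lambda>x. (x_elt G SS {s} x - of_nat m * (x_elt G SS {} x / N)) / 2)
     else if L = {t} then (\<lambda>x. (x_elt G SS {t} x - of_nat m * (x_elt G SS {} x / N)) / 2)
     else if L = SS then (\<lambda>x. x_elt G SS SS x - x_elt G SS {} x / N
        - (x_elt G SS {s} x - of_nat m * (x_elt G SS {} x / N)) / 2
        - (x_elt G SS {t} x - of_nat m * (x_elt G SS {} x / N)) / 2)
     else (\<lambda>_. 0))"

lemma N_nz: "N \<noteq> 0" using m2 by (simp add: N_def)

definition Pfam where "Pfam e \<longleftrightarrow> (\<forall>K. K \<subseteq> SS \<longrightarrow>
        x_elt G SS K = (\<Sum>L\<in>Pow SS. (\<lambda>x. of_nat (m_coef G SS K L) * e L x)))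
      \<and> (\<forall>L. \<not> L \<subseteq> SS \<longrightarrow> e L = (\<lambda>_. 0))"

lemma eqs: "(\<Sum>L\<in>Pow SS. (\<lambda>x. of_nat (m_coef G SS K L) * e L x)) =
   (\<lambda>x. of_nat (m_coef G SS K {}) * e {} x + of_nat (m_coef G SS K {s}) * e {s} x
      + of_nat (m_coef G SS K {t}) * e {t} x + of_nat (m_coef G SS K SS) * e SS x)"
  by (simp add: sum_pow plus_fun_def)

lemma sub_cases: "K \<subseteq> SS \<Longrightarrow> K = {} \<or> K = {s} \<or> K = {t} \<or> K = SS" by blast

lemma ne: "{s} \<noteq> {t}" "{t} \<noteq> {s}" "{s} \<noteq> SS" "{t} \<noteq> SS" "SS \<noteq> {}" "{s} \<noteq> {}" "{t} \<noteq> {}"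
  using s_ne_t by auto

lemma nsub: "\<not> {s} \<subseteq> {}" "\<not> {t} \<subseteq> {}" "\<not> SS \<subseteq> {}" "\<not> {t} \<subseteq> {s}" "\<not> SS \<subseteq> {s}"
   "\<not> {s} \<subseteq> {t}" "\<not> SS \<subseteq> {t}"
  using s_ne_t by auto

lemma mcz: "m_coef G SS {} {s} = 0" "m_coef G SS {} {t} = 0" "m_coef G SS {} SS = 0"
  "m_coef G SS {s} {t} = 0" "m_coef G SS {s} SS = 0" "m_coef G SS {t} {s} = 0" "m_coef G SS {t} SS = 0"
  using nsub by (simp_all add: mc0)

lemma mcS': "m_coef G SS SS {} = 1" "m_coef G SS SS {s} = 1" "m_coef G SS SS {t} = 1" "m_coef G SS SS SS = 1"
  by (simp_all add: mcSL)

lemma mcs0: "m_coef G SS {s} {} = m" "m_coef G SS {t} {} = m" by (simp_all add: mcg0)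

lemma fam0_vals: "fam0 {} = (\<lambda>x. x_elt G SS {} x / N)"
  "fam0 {s} = (\<lambda>x. (x_elt G SS {s} x - of_nat m * (x_elt G SS {} x / N)) / 2)"
  "fam0 {t} = (\<lambda>x. (x_elt G SS {t} x - of_nat m * (x_elt G SS {} x / N)) / 2)"
  "fam0 SS = (\<lambda>x. x_elt G SS SS x - x_elt G SS {} x / N
        - (x_elt G SS {s} x - of_nat m * (x_elt G SS {} x / N)) / 2
        - (x_elt G SS {t} x - of_nat m * (x_elt G SS {} x / N)) / 2)"
  unfolding fam0_def using ne by auto

lemma Pfam_fam0: "Pfam fam0"
  unfolding Pfam_def
proof (intro conjI allI impI)
  fix L assume "\<not> L \<subseteq> SS" thus "fam0 L = (\<lambda>_. 0)" by (auto simp: fam0_def)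
next
  have Nn: "of_nat (2 * m) = N" by (simp add: N_def)
  fix K assume "K \<subseteq> SS"
  hence "K = {} \<or> K = {s} \<or> K = {t} \<or> K = SS" by (rule sub_cases)
  thus "x_elt G SS K = (\<Sum>L\<in>Pow SS. (\<lambda>x. of_nat (m_coef G SS K L) * fam0 L x))"
  proof (elim disjE)
    assume K: "K = {}"
    show ?thesis unfolding eqs K fam0_vals mc00 mcz Nn using N_nz by simp
  next
    assume K: "K = {s}"
    show ?thesis unfolding eqs K fam0_vals mcs0 mcss mcz by (simp add: field_simps)
  next
    assume K: "K = {t}"
    show ?thesis unfolding eqs K fam0_vals mcs0 mctt mcz by (simp add: field_simps)
  next
    assume K: "K = SS"
    show ?thesis unfolding eqs K fam0_vals mcS' by (simp add: field_simps)
  qed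
qed

lemma Pfam_unique: assumes "Pfam e" shows "e = fam0"
proof
  fix L
  have P: "\<And>K. K \<subseteq> SS \<Longrightarrow> x_elt G SS K = (\<lambda>x. of_nat (m_coef G SS K {}) * e {} x + of_nat (m_coef G SS K {s}) * e {s} x
      + of_nat (m_coef G SS K {t}) * e {t} x + of_nat (m_coef G SS K SS) * e SS x)"
    using assms unfolding Pfam_def eqs by blast
  have Nn: "of_nat (2 * m) = N" by (simp add: N_def)
  have e0: "e {} = fam0 {}"
  proof
    fix x show "e {} x = fam0 {} x"
      using fun_cong[OF P[of "{}"], of x] N_nz unfolding mc00 mcz Nn
      by (simp add: fam0_def field_simps)
  qed
  have es: "e {s} = fam0 {s}"
  proof
    fix x show "e {s} x = fam0 {s} x"
      using fun_cong[OF P[of "{s}"], of x] N_nz e0 s_in unfolding mcs0 mcss mcz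
      by (simp add: fam0_def ne field_simps s_ne_t s_ne_t[symmetric])
  qed
  have et: "e {t} = fam0 {t}"
  proof
    fix x show "e {t} x = fam0 {t} x"
      using fun_cong[OF P[of "{t}"], of x] N_nz e0 t_in unfolding mcs0 mctt mcz
      by (simp add: fam0_def ne field_simps s_ne_t s_ne_t[symmetric])
  qed
  have eS: "e SS = fam0 SS"
  proof
    fix x
    have "x_elt G SS SS x = e {} x + e {s} x + e {t} x + e SS x"
      using fun_cong[OF P[of "SS"], of x] unfolding mcS' by simp
    hence "e SS x = x_elt G SS SS x - e {} x - e {s} x - e {t} x" by (simp add: algebra_simps)
    thus "e SS x = fam0 SS x" using e0 es et by (simp add: fam0_vals)
  qed
  show "e L = fam0 L"
  proof (cases "L \<subseteq> SS")
    case True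
    thus ?thesis using sub_cases[OF True] e0 es et eS by auto
  next
    case False
    thus ?thesis using assms Pfam_fam0 unfolding Pfam_def by auto
  qed
qed

lemma e_fam_eq: "e_fam G SS = fam0"
proof -
  have "e_fam G SS = (THE e. Pfam e)" unfolding e_fam_def Pfam_def ..
  also have "\<dots> = fam0" using Pfam_fam0 Pfam_unique by blast
  finally show ?thesis .
qed

end

context dih begin

lemma X_inter: "X_set G SS SS = X_set G SS {s} \<inter> X_set G SS {t}"
  by (auto simp: X_set_def)

lemma desc_w0: assumes z: "z \<in> carrier G"
  shows "(z \<notin> X_set G SS {s} \<and> z \<notin> X_set G SS {t}) \<longleftrightarrow> z = w0"
proof -
  obtain j b where j: "0 \<le> j" "j < int m" "z = E j b" using carrier_E' z by blast
  have w: "z = w0 \<longleftrightarrow> j = int m div 2 \<and> b = odd m"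
    unfolding w0_def j(3) using E_norm_eq[OF j(1,2) w0_range] by simp
  have ns: "z \<notin> X_set G SS {s} \<longleftrightarrow> Ln (sj j) (\<not> b) < Ln j b"
    using asc_sE[OF j(1,2)] A1s[OF j(1,2), of b] j(3) by auto
  have nt: "z \<notin> X_set G SS {t} \<longleftrightarrow> Ln (tj j) (\<not> b) < Ln j b"
    using asc_tE[OF j(1,2)] A1t[OF j(1,2), of b] j(3) by auto
  show ?thesis
  proof (cases b)
    case True
    have "2 * j + 1 = int m \<longleftrightarrow> j = int m div 2 \<and> odd (int m)" by presburger
    thus ?thesis using a5(1)[OF j(1,2) m2i] ns nt w True by (simp add: Ln_def)
  next
    case False
    have "2 * j = int m \<longleftrightarrow> j = int m div 2 \<and> even (int m)" by presburger
    thus ?thesis using a5(2)[OF j(1,2) m2i] ns nt w False by (simp add: Ln_def)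
  qed
qed

lemma count: assumes z: "z \<in> carrier G"
  shows "(if z \<in> X_set G SS {s} then 1 else 0) + (if z \<in> X_set G SS {t} then 1 else 0)
     = (1::complex) + (if z = \<one> then 1 else 0) - (if z = w0 then 1 else 0)"
proof -
  have both: "z \<in> X_set G SS {s} \<and> z \<in> X_set G SS {t} \<longleftrightarrow> z = \<one>"
    using X_SS X_inter by blast
  show ?thesis using both desc_w0[OF z] w0_ne_one by auto
qed

lemma eS_val: "e_fam G SS SS = (\<lambda>y. if y \<in> carrier G then
   ((if y = \<one> then 1 else 0) + (if y = w0 then 1 else 0)) / 2 - 1 / N else 0)"
proof
  fix y
  show "e_fam G SS SS y = (if y \<in> carrier G then
   ((if y = \<one> then 1 else 0) + (if y = w0 then 1 else 0)) / 2 - 1 / N else 0)"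
  proof (cases "y \<in> carrier G")
    case True
    have iy: "inv y \<in> carrier G" using True by simp
    have c: "(if inv y \<in> X_set G SS {s} then 1 else 0) + (if inv y \<in> X_set G SS {t} then 1 else 0)
     = (1::complex) + (if y = \<one> then 1 else 0) - (if y = w0 then 1 else 0)"
    proof -
      have "inv y = \<one> \<longleftrightarrow> y = \<one>" using True by (metis inv_inv inv_one)
      moreover have "inv y = w0 \<longleftrightarrow> y = w0" using True inv_w0 by (metis inv_inv w0_in)
      ultimately show ?thesis using count[OF iy] by simp
    qed
    have S: "inv y \<in> X_set G SS SS \<longleftrightarrow> y = \<one>" using X_SS True by (metis inv_inv inv_one singleton_iff)
    have "e_fam G SS SS y = (if y = \<one> then 1 else 0) - 1 / N
        - ((if inv y \<in> X_set G SS {s} then 1 else 0) - of_nat m / N) / 2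
        - ((if inv y \<in> X_set G SS {t} then 1 else 0) - of_nat m / N) / 2"
      unfolding e_fam_eq fam0_vals x_elt_val using True S iy X_empty by simp
    also have "\<dots> = (if y = \<one> then 1 else 0) - 1 / N + of_nat m / N
        - ((if inv y \<in> X_set G SS {s} then 1 else 0) + (if inv y \<in> X_set G SS {t} then 1 else 0)) / 2"
      by (simp add: field_simps)
    also have "\<dots> = ((if y = \<one> then 1 else 0) + (if y = w0 then 1 else 0)) / 2 - 1 / N"
      unfolding c using m2 by (simp add: N_def field_simps)
    finally show ?thesis using True by simp
  next
    case False
    thus ?thesis unfolding e_fam_eq fam0_vals x_elt_val by simp
  qed
qed

end

context dih begin

lemma sum_lmul: assumes a: "a \<in> carrier G"
  shows "(\<Sum>x\<in>carrier G. f (a \<otimes> x)) = (\<Sum>y\<in>carrier G. f y)"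
  by (rule sum.reindex_bij_witness[where i="\<lambda>y. inv a \<otimes> y" and j="\<lambda>x. a \<otimes> x"])
     (use a in \<open>auto simp flip: m_assoc\<close>)

lemma sum_rmul: assumes a: "a \<in> carrier G"
  shows "(\<Sum>x\<in>carrier G. f (x \<otimes> a)) = (\<Sum>y\<in>carrier G. f y)"
  by (rule sum.reindex_bij_witness[where i="\<lambda>y. y \<otimes> inv a" and j="\<lambda>x. x \<otimes> a"])
     (use a in \<open>auto simp: m_assoc\<close>)

lemma sum_inv: "(\<Sum>x\<in>carrier G. f (inv x)) = (\<Sum>y\<in>carrier G. f y)"
  by (rule sum.reindex_bij_witness[where i="\<lambda>y. inv y" and j="\<lambda>x. inv x"]) auto

lemma sum_left: assumes x: "x \<in> carrier G"
  shows "(\<Sum>u\<in>carrier G. f (inv u \<otimes> x)) = (\<Sum>y\<in>carrier G. f y)"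
  using sum_inv[of "\<lambda>v. f (v \<otimes> x)"] sum_rmul[OF x, of f] by simp

lemma gmult_delta: assumes w: "w \<in> carrier G"
  shows "gmult G v (gdelta w) = (\<lambda>x. if x \<in> carrier G then v (x \<otimes> inv w) else 0)"
proof
  fix x
  show "gmult G v (gdelta w) x = (if x \<in> carrier G then v (x \<otimes> inv w) else 0)"
  proof (cases "x \<in> carrier G")
    case True
    have "(\<Sum>u\<in>carrier G. v u * gdelta w (inv u \<otimes> x)) = (\<Sum>u\<in>carrier G. if u = x \<otimes> inv w then v u else 0)"
    proof (rule sum.cong[OF refl])
      fix u assume u: "u \<in> carrier G"
      have "inv u \<otimes> x = w \<longleftrightarrow> x = u \<otimes> w" using inv_solve_left'[of w u x] u w True by simp
      also have "\<dots> \<longleftrightarrow> u = x \<otimes> inv w" using inv_solve_right[of u x w] u w True by simp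
      finally show "v u * gdelta w (inv u \<otimes> x) = (if u = x \<otimes> inv w then v u else 0)"
        by (simp add: gdelta_def)
    qed
    also have "\<dots> = v (x \<otimes> inv w)" using True w by (simp add: sum.delta')
    finally show ?thesis using True by (simp add: gmult_def)
  qed (simp add: gmult_def)
qed

abbreviation "eS \<equiv> e_fam G SS SS"

lemma gmult_eS: "gmult G eS b = (\<lambda>x. if x \<in> carrier G then
    (b x + b (w0 \<otimes> x)) / 2 - (\<Sum>y\<in>carrier G. b y) / N else 0)"
proof
  fix x
  show "gmult G eS b x = (if x \<in> carrier G then
    (b x + b (w0 \<otimes> x)) / 2 - (\<Sum>y\<in>carrier G. b y) / N else 0)"
  proof (cases "x \<in> carrier G")
    case True
    have "(\<Sum>u\<in>carrier G. eS u * b (inv u \<otimes> x)) = (\<Sum>u\<in>carrier G.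
        ((if u = \<one> then b x else 0) + (if u = w0 then b (w0 \<otimes> x) else 0)) / 2 - b (inv u \<otimes> x) / N)"
    proof (rule sum.cong[OF refl])
      fix u assume u: "u \<in> carrier G"
      show "eS u * b (inv u \<otimes> x) =
        ((if u = \<one> then b x else 0) + (if u = w0 then b (w0 \<otimes> x) else 0)) / 2 - b (inv u \<otimes> x) / N"
        using u True w0_ne_one inv_w0 by (auto simp: eS_val field_simps)
    qed
    also have "\<dots> = (b x + b (w0 \<otimes> x)) / 2 - (\<Sum>u\<in>carrier G. b (inv u \<otimes> x)) / N"
      by (simp add: sum_subtractf sum.distrib sum_divide_distrib[symmetric] add_divide_distrib)
    also have "(\<Sum>u\<in>carrier G. b (inv u \<otimes> x)) = (\<Sum>y\<in>carrier G. b y)" by (rule sum_left[OF True])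
    finally show ?thesis using True by (simp add: gmult_def)
  qed (simp add: gmult_def)
qed

end

context dih begin

definition Vc :: "('a \<Rightarrow> complex) set" where
  "Vc = {v. (\<forall>x. x \<notin> carrier G \<longrightarrow> v x = 0) \<and> (\<forall>x\<in>carrier G. v (w0 \<otimes> x) = v x)
           \<and> (\<Sum>x\<in>carrier G. v x) = 0}"

lemma N_card: "of_nat (card (carrier G)) = N" by (simp add: N_def card_carrier)

lemma w0w0: "x \<in> carrier G \<Longrightarrow> w0 \<otimes> (w0 \<otimes> x) = x"
  by (simp add: w0_inv flip: m_assoc)

lemma Pj_in: "gmult G eS b \<in> Vc"
proof -
  let ?S = "\<Sum>y\<in>carrier G. b y"
  have sum0: "(\<Sum>x\<in>carrier G. (b x + b (w0 \<otimes> x)) / 2 - ?S / N) = 0"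
  proof -
    have "(\<Sum>x\<in>carrier G. (b x + b (w0 \<otimes> x)) / 2 - ?S / N)
        = (?S + (\<Sum>x\<in>carrier G. b (w0 \<otimes> x))) / 2 - of_nat (card (carrier G)) * (?S / N)"
      by (simp add: sum_subtractf sum.distrib sum_divide_distrib[symmetric])
    also have "(\<Sum>x\<in>carrier G. b (w0 \<otimes> x)) = ?S" by (rule sum_lmul[OF w0_in])
    finally show ?thesis using N_nz unfolding N_card by simp
  qed
  show ?thesis unfolding Vc_def gmult_eS using sum0 w0w0 by (auto simp: add.commute)
qed

lemma Pj_fix: "v \<in> Vc \<Longrightarrow> gmult G eS v = v"
  unfolding gmult_eS Vc_def by (auto intro!: ext)

lemma V_eq: "{gmult G eS b | b. b \<in> group_alg G} = Vc"
proof
  show "{gmult G eS b | b. b \<in> group_alg G} \<subseteq> Vc" using Pj_in by auto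
  show "Vc \<subseteq> {gmult G eS b | b. b \<in> group_alg G}"
  proof
    fix v assume v: "v \<in> Vc"
    hence "v \<in> group_alg G" by (simp add: Vc_def group_alg_def)
    thus "v \<in> {gmult G eS b | b. b \<in> group_alg G}" using Pj_fix[OF v] by force
  qed
qed

lemma Vc_sub: "cs.subspace Vc"
proof (rule cs.subspaceI)
  show "0 \<in> Vc" by (simp add: Vc_def)
  fix x y assume "x \<in> Vc" "y \<in> Vc"
  thus "x + y \<in> Vc" by (simp add: Vc_def sum.distrib)
next
  fix c x assume "x \<in> Vc"
  thus "cscale c x \<in> Vc" by (simp add: Vc_def cscale_def sum_distrib_left[symmetric])
qed


definition pp :: "'a \<Rightarrow> 'a \<Rightarrow> complex" where "pp g = gmult G eS (gdelta g)"

lemma sum_delta_G: "g \<in> carrier G \<Longrightarrow> (\<Sum>y\<in>carrier G. gdelta g y) = 1"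
  by (simp add: gdelta_def)

lemma pp_val: "g \<in> carrier G \<Longrightarrow> x \<in> carrier G \<Longrightarrow>
   pp g x = ((if g = x then 1 else 0) + (if g = w0 \<otimes> x then 1 else 0)) / 2 - 1 / N"
  unfolding pp_def gmult_eS by (simp add: sum_delta_G) (auto simp: gdelta_def)

lemma expand: assumes v: "v \<in> Vc" shows "v = (\<Sum>g\<in>carrier G. cscale (v g) (pp g))"
proof
  fix x
  have "(\<Sum>g\<in>carrier G. cscale (v g) (pp g)) x = (\<Sum>g\<in>carrier G. v g * pp g x)"
    by (simp add: fsum_apply cscale_def)
  also have "\<dots> = v x"
  proof (cases "x \<in> carrier G")
    case True
    have "(\<Sum>g\<in>carrier G. v g * pp g x) = (\<Sum>g\<in>carrier G.
        ((if g = x then v g else 0) + (if g = w0 \<otimes> x then v g else 0)) / 2 - v g / N)"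
      by (rule sum.cong[OF refl]) (auto simp: pp_val True field_simps)
    also have "\<dots> = (v x + v (w0 \<otimes> x)) / 2 - (\<Sum>g\<in>carrier G. v g) / N"
      using True by (simp add: sum_subtractf sum.distrib sum_divide_distrib[symmetric] add_divide_distrib
        sum.delta')
    also have "\<dots> = v x" using v True unfolding Vc_def by simp
    finally show ?thesis .
  next
    case False
    hence "\<And>g. pp g x = 0" unfolding pp_def gmult_eS by simp
    thus ?thesis using v False unfolding Vc_def by simp
  qed
  finally show "v x = (\<Sum>g\<in>carrier G. cscale (v g) (pp g)) x" by simp
qed

lemma pp_in: "pp g \<in> Vc" unfolding pp_def by (rule Pj_in)

lemma fV: assumes w: "w \<in> carrier G" and v: "v \<in> Vc" shows "gmult G v (gdelta w) \<in> Vc"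
proof -
  have "(\<Sum>x\<in>carrier G. v (x \<otimes> inv w)) = (\<Sum>x\<in>carrier G. v x)" using sum_rmul[of "inv w" v] w by simp
  moreover have "\<And>x. x \<in> carrier G \<Longrightarrow> v (w0 \<otimes> x \<otimes> inv w) = v (x \<otimes> inv w)"
    using v w unfolding Vc_def by (simp add: m_assoc)
  ultimately show ?thesis using v w unfolding gmult_delta[OF w] Vc_def by simp
qed

lemma flin: assumes w: "w \<in> carrier G"
  shows "gmult G (\<Sum>g\<in>I. cscale (c g) (vv g)) (gdelta w) = (\<Sum>g\<in>I. cscale (c g) (gmult G (vv g) (gdelta w)))"
  unfolding gmult_delta[OF w] by (auto simp: fsum_apply cscale_def intro!: ext)

lemma trace_val: assumes w: "w \<in> carrier G"
  shows "right_ideal_char G eS w = (of_nat (2 * m) * (if w = \<one> then 1 else 0)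
     + (\<Sum>g\<in>carrier G. if w0 \<otimes> (g \<otimes> inv w) = g then 1 else 0)) / 2 - 1"
proof -
  have "right_ideal_char G eS w = subspace_trace Vc (\<lambda>v. gmult G v (gdelta w))"
    unfolding right_ideal_char_def V_eq ..
  also have "\<dots> = (\<Sum>g\<in>carrier G. gmult G (pp g) (gdelta w) g)"
    by (rule trace_formula[OF fin_carrier Vc_sub pp_in expand fV[OF w] flin[OF w]])
  also have "\<dots> = (\<Sum>g\<in>carrier G. ((if w = \<one> then 1 else 0) + (if w0 \<otimes> (g \<otimes> inv w) = g then 1 else 0)) / 2 - 1 / N)"
  proof (rule sum.cong[OF refl])
    fix g assume g: "g \<in> carrier G"
    have "g = g \<otimes> inv w \<longleftrightarrow> inv w = \<one>" using g w by simp
    also have "\<dots> \<longleftrightarrow> w = \<one>" using w by (metis inv_inv inv_one)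
    finally have "g = g \<otimes> inv w \<longleftrightarrow> w = \<one>" .
    thus "gmult G (pp g) (gdelta w) g = ((if w = \<one> then 1 else 0) + (if w0 \<otimes> (g \<otimes> inv w) = g then 1 else 0)) / 2 - 1 / N"
      using g w by (simp add: gmult_delta pp_val eq_commute[of g "w0 \<otimes> (g \<otimes> inv w)"])
  qed
  also have "\<dots> = (of_nat (card (carrier G)) * (if w = \<one> then 1 else 0)
     + (\<Sum>g\<in>carrier G. if w0 \<otimes> (g \<otimes> inv w) = g then 1 else 0)) / 2 - of_nat (card (carrier G)) / N"
    by (simp add: sum_subtractf sum.distrib sum_divide_distrib[symmetric] add_divide_distrib)
  finally show ?thesis using N_nz unfolding N_card by (simp add: N_def card_carrier)
qed

lemma gen_w0: "generate G {w0} = {\<one>, w0}"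
proof
  show "generate G {w0} \<subseteq> {\<one>, w0}"
  proof
    fix x assume "x \<in> generate G {w0}"
    thus "x \<in> {\<one>, w0}"
    proof (induct rule: generate.induct)
      case (inv h) thus ?case using inv_w0 by auto
    next
      case (eng h1 h2) thus ?case using w0_inv by auto
    qed auto
  qed
  show "{\<one>, w0} \<subseteq> generate G {w0}" by (auto intro: generate.one generate.incl)
qed

lemma ind_val: assumes w: "w \<in> carrier G"
  shows "ind_triv G (generate G {longest_elt G SS}) w = (of_nat (2 * m) * (if w = \<one> then 1 else 0)
     + (\<Sum>g\<in>carrier G. if w0 \<otimes> (g \<otimes> inv w) = g then 1 else 0)) / 2"
proof -
  have H: "generate G {longest_elt G SS} = {\<one>, w0}" using longest gen_w0 by simp
  have cH: "card {\<one>, w0} = 2" using w0_ne_one by simp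
  have "(\<Sum>g\<in>carrier G. if inv g \<otimes> w \<otimes> g \<in> {\<one>, w0} then 1 else (0::complex))
      = (\<Sum>g\<in>carrier G. (if w = \<one> then 1 else 0) + (if inv g \<otimes> w \<otimes> g = w0 then 1 else 0))"
  proof (rule sum.cong[OF refl])
    fix g assume g: "g \<in> carrier G"
    have "inv g \<otimes> w \<otimes> g = \<one> \<longleftrightarrow> w = \<one>"
    proof
      assume h: "inv g \<otimes> w \<otimes> g = \<one>"
      have e1: "(inv g \<otimes> w) \<otimes> g = inv g \<otimes> g" using h g by simp
      have e2: "inv g \<otimes> w = inv g" using iffD1[OF right_cancel[of g "inv g \<otimes> w" "inv g"] e1] g w by simp
      show "w = \<one>" using iffD1[OF l_cancel_one[of "inv g" w] e2] g w by simp
    qed (use g in simp)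
    thus "(if inv g \<otimes> w \<otimes> g \<in> {\<one>, w0} then 1 else 0) =
       (if w = \<one> then 1 else (0::complex)) + (if inv g \<otimes> w \<otimes> g = w0 then 1 else 0)"
      using w0_ne_one by auto
  qed
  also have "\<dots> = of_nat (card (carrier G)) * (if w = \<one> then 1 else 0)
      + (\<Sum>g\<in>carrier G. if inv g \<otimes> w \<otimes> g = w0 then 1 else 0)"
    by (simp add: sum.distrib)
  also have "(\<Sum>g\<in>carrier G. if inv g \<otimes> w \<otimes> g = w0 then 1 else (0::complex))
      = (\<Sum>h\<in>carrier G. if inv (inv h) \<otimes> w \<otimes> inv h = w0 then 1 else 0)"
    using sum_inv[of "\<lambda>g. if inv g \<otimes> w \<otimes> g = w0 then 1 else (0::complex)"] by simp
  also have "\<dots> = (\<Sum>h\<in>carrier G. if w0 \<otimes> (h \<otimes> inv w) = h then 1 else 0)"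
  proof (rule sum.cong[OF refl])
    fix h assume h: "h \<in> carrier G"
    have "h \<otimes> w \<otimes> inv h = w0 \<longleftrightarrow> h \<otimes> w = w0 \<otimes> h"
      using inv_solve_right'[of w0 "h \<otimes> w" h] h w by simp
    moreover have "w0 \<otimes> (h \<otimes> inv w) = h \<longleftrightarrow> w0 \<otimes> h = h \<otimes> w"
      using inv_solve_right'[of h "w0 \<otimes> h" w] h w by (simp add: m_assoc)
    ultimately show "(if inv (inv h) \<otimes> w \<otimes> inv h = w0 then 1 else (0::complex)) =
       (if w0 \<otimes> (h \<otimes> inv w) = h then 1 else 0)" using h by auto
  qed
  finally show ?thesis unfolding ind_triv_def H cH card_carrier by simp
qed

theorem main: "\<forall>w\<in>carrier G. right_ideal_char G (e_fam G SS SS) w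
    = ind_triv G (generate G {longest_elt G SS}) w - 1"
  using trace_val ind_val by simp

end

theorem corollary5p5:
  fixes G :: "('a, 'b) monoid_scheme" and s t :: 'a and m :: nat
  assumes "group G"
    and "s \<in> carrier G" and "t \<in> carrier G"
    and "carrier G = generate G {s, t}"
    and "s \<noteq> \<one>\<^bsub>G\<^esub>" and "t \<noteq> \<one>\<^bsub>G\<^esub>"
    and "s \<otimes>\<^bsub>G\<^esub> s = \<one>\<^bsub>G\<^esub>" and "t \<otimes>\<^bsub>G\<^esub> t = \<one>\<^bsub>G\<^esub>"
    and "m \<ge> 2"
    and "(s \<otimes>\<^bsub>G\<^esub> t) [^]\<^bsub>G\<^esub> m = \<one>\<^bsub>G\<^esub>"
    and "\<forall>k. 0 < k \<and> k < m \<longrightarrow> (s \<otimes>\<^bsub>G\<^esub> t) [^]\<^bsub>G\<^esub> k \<noteq> \<one>\<^bsub>G\<^esub>"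
  shows "\<forall>w\<in>carrier G.
           right_ideal_char G (e_fam G {s, t} {s, t}) w
         = ind_triv G (generate G {longest_elt G {s, t}}) w - 1"
  proof -
  have "dih G s t m" unfolding dih_def dih_axioms_def using assms by auto
  then interpret dih G s t m .
  show ?thesis using main .
qed

end
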